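(* Let $n\ge 3$, let $\{(M_i,g_i)\}_{i\ge1}$ be a sequence in $\mathcal{RotSym}_n$ with graphical representatives $f_i$, all defined on $[a_0,\infty)$ for some $a_0>0$, and suppose $f_i(r)\to f(r)$ for every $r\ge a_0$, for some function $f:[a_0,\infty)\to\mathbb{R}$. If $r_0\in(a_0,\infty)$ and $f$ is differentiable at $r_0$, then $\lim_{i\to\infty}f_i'(r_0)=f'(r_0)$.
   Context: $\mathcal{RotSym}_n$ is the class of smooth Riemannian $n$-manifolds $(M,g)$ with $g=ds^2+h(s)^2g_{S^{n-1}}$, $h:[0,\infty)\to[0,\infty)$ smooth, such that either $h(0)=0,h'(0)=1$ or $h(0)>0,h'(0)=0$; $h'(s)>0$ for $s>0$; $h(s)\to\infty$; and $g$ has nonnegative scalar curvature. A graphical representative is a radial function $f(r)$, $r=|\vec x|\ge h(0)$, continuous and smooth in the interior, whose graph in $\mathbb{R}^{n+1}$ with induced Euclidean metric is isometric to $(M,g)$. For such $f$, the function $r\mapsto r^{n-2}\frac{f'(r)^2}{1+f'(r)^2}$ (twice the Hawking mass of the sphere over $|\vec x|=r$) is nondecreasing and $f'\ge 0$. *)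

theory Defs
  imports "HOL-Analysis.Analysis"
begin

definition smooth_real :: "(real \<Rightarrow> real) \<Rightarrow> bool" where
  "smooth_real H \<longleftrightarrow> (\<forall>k x. (deriv ^^ k) H differentiable at x)"

definition smooth_on_open :: "real set \<Rightarrow> (real \<Rightarrow> real) \<Rightarrow> bool" where
  "smooth_on_open U f \<longleftrightarrow> (\<forall>k. \<forall>x\<in>U. (deriv ^^ k) f differentiable at x)"

text \<open>Scalar curvature at radius s > 0 of the warped product metric
  ds^2 + h(s)^2 g_{S^{n-1}} on an n-manifold.\<close>
definition warped_scalar :: "nat \<Rightarrow> (real \<Rightarrow> real) \<Rightarrow> real \<Rightarrow> real" where
  "warped_scalar n h s =
     (real n - 1) * ((real n - 2) * (1 - (deriv h s)^2) - 2 * h s * deriv (deriv h) s) / (h s)^2"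

text \<open>The class RotSym_n, described by the warping function h on [0,oo).
  Smoothness of h on the closed half-line [0,oo) is expressed as the existence of
  a smooth function H on the real line agreeing with h on [0,oo) (Seeley extension);
  derivatives at s = 0 are those of H (the one-sided derivatives of h).\<close>
definition rotsym :: "nat \<Rightarrow> (real \<Rightarrow> real) \<Rightarrow> bool" where
  "rotsym n h \<longleftrightarrow>
     (\<exists>H. smooth_real H \<and> (\<forall>s\<ge>0. H s = h s) \<and>
        ((h 0 = 0 \<and> deriv H 0 = 1) \<or> (h 0 > 0 \<and> deriv H 0 = 0)) \<and>
        (\<forall>s>0. deriv H s > 0) \<and>
        filterlim h at_top at_top \<and>
        (\<forall>s\<ge>0. h s \<ge> 0) \<and>
        (\<forall>s\<ge>0. warped_scalar n H s \<ge> 0 \<or> (s = 0 \<and> h 0 = 0)))"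

text \<open>A graphical representative of the manifold with warping function h: a radial
  function f(r), r = |x| \<ge> h 0, continuous on [h 0, oo) and smooth in the interior,
  whose graph (with induced metric (1 + f'(r)^2) dr^2 + r^2 g_{S^{n-1}}) is isometric
  to ds^2 + h(s)^2 g_{S^{n-1}} via r = h(s), i.e. (1 + f'(h s)^2) h'(s)^2 = 1 for s > 0,
  normalized with f' \<ge> 0.\<close>
definition graphrep :: "(real \<Rightarrow> real) \<Rightarrow> (real \<Rightarrow> real) \<Rightarrow> bool" where
  "graphrep h f \<longleftrightarrow>
     continuous_on {h 0..} f \<and> smooth_on_open {h 0<..} f \<and>
     (\<forall>s>0. (1 + (deriv f (h s))^2) * (deriv h s)^2 = 1) \<and>
     (\<forall>r>h 0. deriv f r \<ge> 0)"

end

theory Submission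
  imports Defs
begin

definition phi :: "real \<Rightarrow> real" where "phi t = t^2 / (1 + t^2)"

lemma phi_alt: "phi t = 1 - 1/(1+t^2)"
proof -
  have "1 + t^2 > 0" by (simp add: add_pos_nonneg)
  thus ?thesis unfolding phi_def by (simp add: field_simps)
qed

lemma phi_less: assumes "0 \<le> a" "a < b" shows "phi a < phi b"
proof -
  have "a^2 < b^2" using assms by (simp add: power_strict_mono)
  hence "1 + a^2 < 1 + b^2" by simp
  moreover have "0 < 1 + a^2" by (simp add: add_pos_nonneg)
  ultimately have "1/(1+b^2) < 1/(1+a^2)" by (simp add: frac_less2)
  thus ?thesis by (simp add: phi_alt)
qed

lemma phi_le: assumes "0 \<le> a" "a \<le> b" shows "phi a \<le> phi b"
  using phi_less[OF assms(1)] assms(2) by (metis order_le_less)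

lemma phi_nonneg: "phi t \<ge> 0" unfolding phi_def by (simp add: add_pos_nonneg)

lemma hawking:
  assumes n3: "n \<ge> 3" and rs: "rotsym n h" and gr: "graphrep h F"
    and r1: "h 0 < r1" and r12: "r1 \<le> r2"
  shows "r1^(n-2) * phi (deriv F r1) \<le> r2^(n-2) * phi (deriv F r2)"
proof -
  obtain H where sm: "smooth_real H" and Hh: "\<forall>s\<ge>0. H s = h s"
    and d0: "(h 0 = 0 \<and> deriv H 0 = 1) \<or> (h 0 > 0 \<and> deriv H 0 = 0)"
    and dpos: "\<forall>s>0. deriv H s > 0" and lim: "filterlim h at_top at_top"
    and hnn: "\<forall>s\<ge>0. h s \<ge> 0"
    and sc: "\<forall>s\<ge>0. warped_scalar n H s \<ge> 0 \<or> (s = 0 \<and> h 0 = 0)"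
    using rs unfolding rotsym_def by blast
  have Hd: "H differentiable at x" for x using sm unfolding smooth_real_def
    by (metis funpow_0)
  have Hdd: "deriv H differentiable at x" for x
  proof -
    have "(deriv ^^ 1) H differentiable at x" using sm unfolding smooth_real_def by blast
    thus ?thesis by simp
  qed
  have HD: "DERIV H x :> deriv H x" for x using Hd DERIV_deriv_iff_real_differentiable by blast
  have HDD: "DERIV (deriv H) x :> deriv (deriv H) x" for x
    using Hdd DERIV_deriv_iff_real_differentiable by blast
  have Hc: "isCont H x" for x using Hd differentiable_imp_continuous_within by blast
  have Hmono: "H x < H y" if "0 \<le> x" "x < y" for x y
  proof -
    obtain l z where z: "x < z" "z < y" and dz: "DERIV H z :> l" and e: "H y - H x = (y - x) * l"
      using MVT[OF \<open>x<y\<close>, of H] Hd continuous_at_imp_continuous_on Hc by blast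
    have "l = deriv H z" using dz DERIV_imp_deriv by metis
    moreover have "deriv H z > 0" using dpos \<open>0 \<le> x\<close> \<open>x < z\<close> by auto
    ultimately have l0: "l > 0" by simp
    have "(y - x) * l > 0" using l0 \<open>x < y\<close> by simp
    thus ?thesis using e by linarith
  qed
  have Hpos: "H s > 0" if "s > 0" for s
    using Hmono[of 0 s] that Hh hnn by force
  have surj: "\<exists>s>0. H s = r" if "r > h 0" for r
  proof -
    from lim have "eventually (\<lambda>s. h s \<ge> r) at_top" by (simp add: filterlim_at_top)
    moreover have "eventually (\<lambda>s. s \<ge> (1::real)) at_top" by (rule eventually_ge_at_top)
    ultimately have "eventually (\<lambda>s. h s \<ge> r \<and> s \<ge> 1) at_top" by (rule eventually_conj)
    then obtain S where S: "h S \<ge> r" "S \<ge> 1"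
      unfolding eventually_at_top_linorder by blast
    have "H 0 \<le> r" "r \<le> H S" using Hh S that by auto
    then obtain s where s: "0 \<le> s" "s \<le> S" "H s = r" using IVT[of H 0 r S] Hc S by auto
    have "s \<noteq> 0" using s Hh that by auto
    hence "s > 0" using s(1) by simp
    thus ?thesis using s(3) by blast
  qed
  have phiH: "phi (deriv F (H s)) = 1 - (deriv H s)^2" if "s > 0" for s
  proof -
    have "deriv h s = deriv H s"
    proof (rule deriv_cong_ev[OF _ refl])
      have "eventually (\<lambda>x. x \<in> {0<..}) (nhds s)" using that
        by (intro eventually_nhds_in_open) auto
      thus "eventually (\<lambda>x. h x = H x) (nhds s)" by eventually_elim (use Hh in auto)
    qed
    moreover have "(1 + (deriv F (h s))^2) * (deriv h s)^2 = 1"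
      using gr that unfolding graphrep_def by blast
    ultimately have e: "(1 + (deriv F (H s))^2) * (deriv H s)^2 = 1" using Hh that by auto
    have "1 + (deriv F (H s))^2 > 0" by (simp add: add_pos_nonneg)
    hence "(deriv H s)^2 = 1/(1 + (deriv F (H s))^2)" using e by (simp add: field_simps)
    thus ?thesis by (simp add: phi_alt)
  qed
  define p where "p = n - 2"
  have p1: "p \<ge> 1" using n3 p_def by auto
  have rp: "real n - 2 = real p" using n3 p_def by auto
  define mu where "mu s = H s ^ p * (1 - (deriv H s)^2)" for s
  have mumono: "mu s1 \<le> mu s2" if "0 < s1" "s1 \<le> s2" for s1 s2
  proof (rule DERIV_nonneg_imp_increasing_open[OF \<open>s1 \<le> s2\<close>])
    show "continuous_on {s1..s2} mu" unfolding mu_def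
      by (intro continuous_at_imp_continuous_on ballI continuous_intros Hc)
        (use Hdd differentiable_imp_continuous_within in blast)
    fix x assume x: "s1 < x" "x < s2"
    hence x0: "x > 0" using that by auto
    let ?D = "real p * H x ^ (p - 1) * deriv H x * (1 - (deriv H x)^2)
              + H x ^ p * (- (2 * deriv H x * deriv (deriv H) x))"
    have "DERIV mu x :> ?D" unfolding mu_def
      by (auto intro!: derivative_eq_intros HD HDD simp: power2_eq_square)
    moreover have "?D \<ge> 0"
    proof -
      have w: "warped_scalar n H x \<ge> 0" using sc[rule_format, of x] x0 by auto
      have Hx: "H x > 0" using Hpos x0 .
      have "(real n - 1) * ((real n - 2) * (1 - (deriv H x)^2) - 2 * H x * deriv (deriv H) x) / (H x)^2 \<ge> 0"
        using w unfolding warped_scalar_def .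
      hence "((real n - 2) * (1 - (deriv H x)^2) - 2 * H x * deriv (deriv H) x) \<ge> 0"
        using Hx n3 by (simp add: zero_le_divide_iff zero_le_mult_iff)
      hence B: "real p * (1 - (deriv H x)^2) - 2 * H x * deriv (deriv H) x \<ge> 0" using rp by simp
      have "H x ^ p = H x * H x ^ (p - 1)" using p1 by (metis Suc_diff_le diff_Suc_1 power_Suc)
      hence "?D = H x ^ (p - 1) * deriv H x * (real p * (1 - (deriv H x)^2) - 2 * H x * deriv (deriv H) x)"
        by (simp add: algebra_simps)
      moreover have "H x ^ (p - 1) * deriv H x \<ge> 0"
        using Hx dpos[rule_format, OF x0] by (simp add: less_imp_le)
      ultimately show ?thesis using B by simp
    qed
    ultimately show "\<exists>y. DERIV mu x :> y \<and> y \<ge> 0" by blast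
  qed
  obtain s1 where s1: "s1 > 0" "H s1 = r1" using surj r1 by blast
  have "r2 > h 0" using r1 r12 by simp
  then obtain s2 where s2: "s2 > 0" "H s2 = r2" using surj by blast
  have "s1 \<le> s2"
  proof (rule ccontr)
    assume "\<not> s1 \<le> s2" hence "H s2 < H s1" using Hmono s2 by auto
    thus False using s1 s2 r12 by auto
  qed
  hence "mu s1 \<le> mu s2" using mumono s1 by blast
  moreover have "mu s1 = r1^(n-2) * phi (deriv F r1)"
    unfolding mu_def p_def using phiH[OF s1(1)] s1(2) by simp
  moreover have "mu s2 = r2^(n-2) * phi (deriv F r2)"
    unfolding mu_def p_def using phiH[OF s2(1)] s2(2) by simp
  ultimately show ?thesis by simp
qed

lemma gr_diff: "graphrep h F \<Longrightarrow> r > h 0 \<Longrightarrow> F differentiable at r"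
proof -
  assume "graphrep h F" "r > h 0"
  hence "(deriv ^^ 0) F differentiable at r" unfolding graphrep_def smooth_on_open_def by blast
  thus ?thesis by simp
qed

lemma gr_nn: "graphrep h F \<Longrightarrow> r > h 0 \<Longrightarrow> deriv F r \<ge> 0"
  unfolding graphrep_def by blast

lemma upper:
  fixes F :: "real \<Rightarrow> real" and b c \<delta> u v :: real and p :: nat
  assumes diff: "\<And>r. r > b \<Longrightarrow> F differentiable at r"
    and nn: "\<And>r. r > b \<Longrightarrow> deriv F r \<ge> 0"
    and mono: "\<And>r1 r2. b < r1 \<Longrightarrow> r1 \<le> r2 \<Longrightarrow> r1^p * phi (deriv F r1) \<le> r2^p * phi (deriv F r2)"
    and b0: "0 \<le> b" and br: "b < c" and d0: "0 < \<delta>" and du: "deriv F c \<ge> u" and vu: "v < u"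
    and cond: "v > 0 \<Longrightarrow> phi u * (c/(c+\<delta>))^p > phi v"
  shows "F (c+\<delta>) - F c \<ge> \<delta> * v"
proof -
  have lt: "c < c + \<delta>" using d0 by simp
  have cont: "continuous_on {c..c+\<delta>} F"
    by (intro continuous_at_imp_continuous_on ballI differentiable_imp_continuous_within diff)
      (use br in auto)
  obtain l \<xi> where xi: "c < \<xi>" "\<xi> < c + \<delta>" and dl: "DERIV F \<xi> :> l"
    and e: "F (c+\<delta>) - F c = (c + \<delta> - c) * l"
    using MVT[OF lt cont] diff br by (metis less_trans)
  have l: "l = deriv F \<xi>" using dl DERIV_imp_deriv by metis
  have "deriv F \<xi> \<ge> v"
  proof (cases "v > 0")
    case False
    thus ?thesis using nn[of \<xi>] xi br by simp
  next
    case True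
    have u0: "u > 0" using True vu by simp
    have "phi u \<le> phi (deriv F c)" using phi_le u0 du by simp
    have m: "c^p * phi (deriv F c) \<le> \<xi>^p * phi (deriv F \<xi>)" using mono[of c \<xi>] br xi by simp
    have cp: "c > 0" using b0 br by simp
    have "c/(c+\<delta>) \<le> c/\<xi>" using cp xi by (simp add: frac_le)
    hence pw: "(c/(c+\<delta>))^p \<le> (c/\<xi>)^p" using cp d0 by (intro power_mono) auto
    have "phi v < phi u * (c/(c+\<delta>))^p" using cond True by simp
    also have "\<dots> \<le> phi (deriv F c) * (c/\<xi>)^p"
      using pw \<open>phi u \<le> phi (deriv F c)\<close> phi_nonneg[of u] cp d0 by (intro mult_mono) auto
    also have "\<dots> = c^p * phi (deriv F c) / \<xi>^p" by (simp add: power_divide)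
    also have "\<dots> \<le> phi (deriv F \<xi>)" using m cp xi by (simp add: pos_divide_le_eq mult.commute)
    finally have "phi v < phi (deriv F \<xi>)" .
    thus ?thesis using phi_less[of "deriv F \<xi>" v] nn[of \<xi>] xi br by force
  qed
  thus ?thesis using e l d0 by (simp add: mult_left_mono)
qed

lemma lower:
  fixes F :: "real \<Rightarrow> real" and b c \<delta> u v :: real and p :: nat
  assumes diff: "\<And>r. r > b \<Longrightarrow> F differentiable at r"
    and nn: "\<And>r. r > b \<Longrightarrow> deriv F r \<ge> 0"
    and mono: "\<And>r1 r2. b < r1 \<Longrightarrow> r1 \<le> r2 \<Longrightarrow> r1^p * phi (deriv F r1) \<le> r2^p * phi (deriv F r2)"
    and b0: "0 \<le> b" and br: "b < c - \<delta>" and d0: "0 < \<delta>" and du: "deriv F c \<le> u" and vu: "u < v"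
    and cond: "u \<ge> 0 \<Longrightarrow> phi u * (c/(c-\<delta>))^p < phi v"
  shows "F c - F (c-\<delta>) \<le> \<delta> * v"
proof -
  have lt: "c - \<delta> < c" using d0 by simp
  have cont: "continuous_on {c-\<delta>..c} F"
    by (intro continuous_at_imp_continuous_on ballI differentiable_imp_continuous_within diff)
      (use br in auto)
  obtain l \<xi> where xi: "c - \<delta> < \<xi>" "\<xi> < c" and dl: "DERIV F \<xi> :> l"
    and e: "F c - F (c-\<delta>) = (c - (c - \<delta>)) * l"
    using MVT[OF lt cont] diff br by (metis less_trans)
  have l: "l = deriv F \<xi>" using dl DERIV_imp_deriv by metis
  have d0': "deriv F c \<ge> 0" using nn br d0 by simp
  hence u0: "u \<ge> 0" using du by simp
  have "deriv F \<xi> < v"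
  proof -
    have "phi (deriv F c) \<le> phi u" using phi_le d0' du by simp
    have m: "\<xi>^p * phi (deriv F \<xi>) \<le> c^p * phi (deriv F c)" using mono[of \<xi> c] br xi by simp
    have xp: "\<xi> > 0" using b0 br xi by simp
    have "c/\<xi> \<le> c/(c-\<delta>)" using xp xi b0 br by (simp add: frac_le)
    hence pw: "(c/\<xi>)^p \<le> (c/(c-\<delta>))^p" using xp xi by (intro power_mono) auto
    have "phi (deriv F \<xi>) \<le> c^p * phi (deriv F c) / \<xi>^p" using m xp by (simp add: pos_le_divide_eq mult.commute)
    also have "\<dots> = phi (deriv F c) * (c/\<xi>)^p" by (simp add: power_divide)
    also have "\<dots> \<le> phi u * (c/(c-\<delta>))^p"
      using pw \<open>phi (deriv F c) \<le> phi u\<close> phi_nonneg[of "deriv F c"] xp xi by (intro mult_mono) auto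
    also have "\<dots> < phi v" using cond u0 by simp
    finally have "phi (deriv F \<xi>) < phi v" .
    thus ?thesis using phi_le[of v "deriv F \<xi>"] u0 vu by force
  qed
  thus ?thesis using e l d0 by (simp add: mult_left_mono)
qed

theorem lemma4p3:
  fixes n :: nat and h F :: "nat \<Rightarrow> real \<Rightarrow> real" and f :: "real \<Rightarrow> real"
    and a0 r0 :: real
  assumes "n \<ge> 3"
    and "\<And>i. rotsym n (h i)"
    and "\<And>i. graphrep (h i) (F i)"
    and "a0 > 0"
    and "\<And>i. h i 0 \<le> a0"
    and "\<And>r. r \<ge> a0 \<Longrightarrow> (\<lambda>i. F i r) \<longlonglongrightarrow> f r"
    and "r0 > a0"
    and "f differentiable at r0"
  shows "(\<lambda>i. deriv (F i) r0) \<longlonglongrightarrow> deriv f r0"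
proof -
  note n3 = assms(1) and rs = assms(2) and gr = assms(3) and a0p = assms(4) and ha = assms(5)
    and conv = assms(6) and ra = assms(7)
  define D where "D = deriv f r0"
  define p where "p = n - 2"
  have DD: "DERIV f r0 :> D" using assms(8) DERIV_deriv_iff_real_differentiable D_def by blast
  hence Q: "((\<lambda>t. (f (r0 + t) - f r0) / t) \<longlongrightarrow> D) (at 0)" by (simp add: DERIV_def)
  hence QR: "((\<lambda>t. (f (r0 + t) - f r0) / t) \<longlongrightarrow> D) (at_right 0)"
    and QL: "((\<lambda>t. (f (r0 + t) - f r0) / t) \<longlongrightarrow> D) (at_left 0)"
    by (auto simp: filterlim_at_split)
  have h0: "0 \<le> h i 0" for i using rs[of i] unfolding rotsym_def by auto
  have dif: "\<And>r. r > h i 0 \<Longrightarrow> F i differentiable at r" for i using gr_diff gr by blast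
  have nn: "\<And>r. r > h i 0 \<Longrightarrow> deriv (F i) r \<ge> 0" for i using gr_nn gr by blast
  have mono: "\<And>r1 r2. h i 0 < r1 \<Longrightarrow> r1 \<le> r2 \<Longrightarrow>
      r1^p * phi (deriv (F i) r1) \<le> r2^p * phi (deriv (F i) r2)" for i
    unfolding p_def using hawking[OF n3 rs gr] by blast
  have tr: "((\<lambda>t. c * (r0/(r0+t))^p) \<longlongrightarrow> c) (at_right 0)" for c
  proof -
    have "((\<lambda>t. c * (r0/(r0+t))^p) \<longlongrightarrow> c * (r0/(r0+0))^p) (at_right 0)"
      using ra a0p by (intro tendsto_intros) auto
    thus ?thesis using ra a0p by simp
  qed
  have tl: "((\<lambda>t. c * (r0/(r0-t))^p) \<longlongrightarrow> c) (at_right 0)" for c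
  proof -
    have "((\<lambda>t. c * (r0/(r0-t))^p) \<longlongrightarrow> c * (r0/(r0-0))^p) (at_right 0)"
      using ra a0p by (intro tendsto_intros) auto
    thus ?thesis using ra a0p by simp
  qed
  show ?thesis unfolding D_def[symmetric]
  proof (rule order_tendstoI)
    fix a assume aD: "a > D"
    define v where "v = (D + a) / 2"
    define w where "w = (D + v) / 2"
    have vD: "D < w" "w < v" "v < a" using aD unfolding v_def w_def by auto
    have E1: "eventually (\<lambda>t. (f (r0 + t) - f r0) / t < w) (at_right 0)"
      using order_tendstoD(2)[OF QR vD(1)] .
    have E2: "eventually (\<lambda>t. v > 0 \<longrightarrow> phi a * (r0/(r0+t))^p > phi v) (at_right 0)"
    proof (cases "v > 0")
      case True
      hence "phi v < phi a" using phi_less vD by simp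
      from order_tendstoD(1)[OF tr this] show ?thesis by (rule eventually_mono) simp
    qed simp
    have E3: "eventually (\<lambda>t. t > 0) (at_right (0::real))" by (rule eventually_at_right_less)
    have "eventually (\<lambda>t. (f (r0 + t) - f r0) / t < w \<and> (v > 0 \<longrightarrow> phi a * (r0/(r0+t))^p > phi v) \<and> t > 0) (at_right 0)"
      using E1 E2 E3 by (intro eventually_conj)
    then obtain \<delta> where \<delta>: "(f (r0 + \<delta>) - f r0) / \<delta> < w"
      "v > 0 \<Longrightarrow> phi a * (r0/(r0+\<delta>))^p > phi v" "\<delta> > 0"
      using eventually_happens'[of "at_right (0::real)"] by auto
    have fl: "f (r0 + \<delta>) - f r0 < \<delta> * v"
    proof -
      have "f (r0 + \<delta>) - f r0 < \<delta> * w" using \<delta>(1,3) by (simp add: divide_less_eq mult.commute)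
      also have "\<dots> < \<delta> * v" using \<delta>(3) vD by simp
      finally show ?thesis .
    qed
    have "(\<lambda>i. F i (r0 + \<delta>) - F i r0) \<longlonglongrightarrow> f (r0 + \<delta>) - f r0"
      using conv[of "r0 + \<delta>"] conv[of r0] ra \<delta>(3) by (intro tendsto_diff) auto
    from order_tendstoD(2)[OF this fl]
    show "eventually (\<lambda>i. deriv (F i) r0 < a) sequentially"
    proof (rule eventually_mono)
      fix i assume lt: "F i (r0 + \<delta>) - F i r0 < \<delta> * v"
      show "deriv (F i) r0 < a"
      proof (rule ccontr)
        assume "\<not> deriv (F i) r0 < a"
        hence "deriv (F i) r0 \<ge> a" by simp
        have "F i (r0 + \<delta>) - F i r0 \<ge> \<delta> * v"
          apply (rule upper[where b="h i 0" and F="F i" and c=r0 and \<delta>=\<delta> and u=a and v=v and p=p])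
          apply (fact dif)
          apply (fact nn)
          apply (fact mono)
          apply (fact h0)
          using ha[of i] ra \<delta> vD \<open>deriv (F i) r0 \<ge> a\<close> by auto
        thus False using lt by simp
      qed
    qed
  next
    fix a assume aD: "a < D"
    define v where "v = (D + a) / 2"
    define w where "w = (D + v) / 2"
    have vD: "a < v" "v < w" "w < D" using aD unfolding v_def w_def by auto
    have E1': "eventually (\<lambda>t. (f (r0 + t) - f r0) / t > w) (at_left 0)"
      using order_tendstoD(1)[OF QL vD(3)] .
    have E1: "eventually (\<lambda>t. (f (r0 + - t) - f r0) / (- t) > w) (at_right 0)"
      using E1' unfolding eventually_at_left_to_right by simp
    have E2: "eventually (\<lambda>t. a \<ge> 0 \<longrightarrow> phi a * (r0/(r0-t))^p < phi v) (at_right 0)"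
    proof (cases "a \<ge> 0")
      case True
      hence "phi a < phi v" using phi_less vD by simp
      from order_tendstoD(2)[OF tl this] show ?thesis by (rule eventually_mono) simp
    qed simp
    have E3: "eventually (\<lambda>t. t > 0) (at_right (0::real))" by (rule eventually_at_right_less)
    have E4: "eventually (\<lambda>t. t < r0 - a0) (at_right (0::real))"
      using order_tendstoD(2)[OF tendsto_ident_at[of 0 "{0<..}"], of "r0 - a0"] ra by simp
    have "eventually (\<lambda>t. (f (r0 + - t) - f r0) / (- t) > w \<and> (a \<ge> 0 \<longrightarrow> phi a * (r0/(r0-t))^p < phi v) \<and> t > 0 \<and> t < r0 - a0) (at_right 0)"
      using E1 E2 E3 E4 by (intro eventually_conj)
    then obtain \<delta> where \<delta>: "(f (r0 + - \<delta>) - f r0) / (- \<delta>) > w"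
      "a \<ge> 0 \<Longrightarrow> phi a * (r0/(r0-\<delta>))^p < phi v" "\<delta> > 0" "\<delta> < r0 - a0"
      using eventually_happens'[of "at_right (0::real)"] by auto
    have fl: "f r0 - f (r0 - \<delta>) > \<delta> * v"
    proof -
      have "(f (r0 + - \<delta>) - f r0) / (- \<delta>) = (f r0 - f (r0 - \<delta>)) / \<delta>"
        by (simp add: minus_divide_left)
      hence "(f r0 - f (r0 - \<delta>)) / \<delta> > w" using \<delta>(1) by simp
      hence "f r0 - f (r0 - \<delta>) > \<delta> * w" using \<delta>(3) by (simp add: less_divide_eq mult.commute)
      moreover have "\<delta> * w > \<delta> * v" using \<delta>(3) vD by simp
      ultimately show ?thesis by simp
    qed
    have "(\<lambda>i. F i r0 - F i (r0 - \<delta>)) \<longlonglongrightarrow> f r0 - f (r0 - \<delta>)"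
      using conv[of "r0 - \<delta>"] conv[of r0] ra \<delta>(4) by (intro tendsto_diff) auto
    from order_tendstoD(1)[OF this fl]
    show "eventually (\<lambda>i. a < deriv (F i) r0) sequentially"
    proof (rule eventually_mono)
      fix i assume lt: "F i r0 - F i (r0 - \<delta>) > \<delta> * v"
      show "a < deriv (F i) r0"
      proof (rule ccontr)
        assume "\<not> a < deriv (F i) r0"
        hence "deriv (F i) r0 \<le> a" by simp
        have "F i r0 - F i (r0 - \<delta>) \<le> \<delta> * v"
          apply (rule lower[where b="h i 0" and F="F i" and c=r0 and \<delta>=\<delta> and u=a and v=v and p=p])
          apply (fact dif)
          apply (fact nn)
          apply (fact mono)
          apply (fact h0)
          using ha[of i] ra \<delta> vD \<open>deriv (F i) r0 \<le> a\<close> by auto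
        thus False using lt by simp
      qed
    qed
  qed
qed

end
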